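(* Let $n=2^k$ for some integer $k\ge1$. Let $V=\{v\in\{-1,1\}^n : v_1=1\}$, $P(V)=\{\sum_{v\in W}v : W\subseteq V\}$, $g(V)=\frac12\sum_{v\in V}v$, $\mathbf{1}=(1,\dots,1)\in\mathbb{R}^n$, $M=2^{n-2}-\frac12\binom{n-1}{n/2}+\frac12$, and $K_M=\{(x_1,\dots,x_n)\in\mathbb{R}^n : x_i\le M\ \forall i\}$. Then there exists $w\in\mathbb{Z}^n$ with $w_i\le 1$ for all $i$ such that \[0\in P(V)-g(V)-\tfrac12\binom{n-1}{n/2}\mathbf{1}+\tfrac12 w\subset K_M.\] *)

theory Defs
  imports Complex_Main
begin

text \<open>Vectors in R^n are represented as functions nat => real, coordinates 0..n-1
  (coordinate i corresponds to the paper's coordinate i+1), zero outside {0..<n}.\<close>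

definition Vset :: "nat \<Rightarrow> (nat \<Rightarrow> real) set" where
  "Vset n = {v. (\<forall>i<n. v i = 1 \<or> v i = -1) \<and> (\<forall>i. n \<le> i \<longrightarrow> v i = 0) \<and> v 0 = 1}"

definition Pset :: "nat \<Rightarrow> (nat \<Rightarrow> real) set" where
  "Pset n = {(\<lambda>i. \<Sum>v\<in>W. v i) | W. W \<subseteq> Vset n}"

definition gV :: "nat \<Rightarrow> nat \<Rightarrow> real" where
  "gV n = (\<lambda>i. (1/2) * (\<Sum>v\<in>Vset n. v i))"

definition Mval :: "nat \<Rightarrow> real" where
  "Mval n = 2 ^ (n - 2) - (1/2) * real ((n - 1) choose (n div 2)) + 1/2"

definition KM :: "nat \<Rightarrow> real \<Rightarrow> (nat \<Rightarrow> real) set" where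
  "KM n M = {x. \<forall>i<n. x i \<le> M}"

definition shifted :: "nat \<Rightarrow> (nat \<Rightarrow> int) \<Rightarrow> (nat \<Rightarrow> real) set" where
  "shifted n w = (\<lambda>x. \<lambda>i. if i < n then x i - gV n i - (1/2) * real ((n - 1) choose (n div 2))
                               + (1/2) * real_of_int (w i) else 0) ` Pset n"

end

theory Submission
  imports Defs "HOL-Number_Theory.Cong"
begin

definition rot :: "nat \<Rightarrow> nat \<Rightarrow> nat set \<Rightarrow> nat set" where
  "rot N t A = (\<lambda>a. (a + t) mod N) ` A"

lemma rot_comp: "rot N s (rot N t A) = rot N (t + s) A"
  unfolding rot_def image_image by (simp add: mod_add_left_eq add.assoc)

lemma rot_mod: "rot N t A = rot N (t mod N) A"
  unfolding rot_def by (simp add: mod_add_right_eq)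

lemma rot_0: "A \<subseteq> {..<N} \<Longrightarrow> rot N 0 A = A"
  unfolding rot_def by (auto simp: subset_eq image_iff)

lemma inj_shift: "inj_on (\<lambda>a::nat. (a + t) mod N) {..<N}"
proof
  fix a b assume "a \<in> {..<N}" "b \<in> {..<N}" "(a + t) mod N = (b + t) mod N"
  then have "[a + t = b + t] (mod N)" by (simp add: cong_def)
  then have "[a = b] (mod N)" by (simp add: cong_add_rcancel_nat)
  then show "a = b" using \<open>a \<in> {..<N}\<close> \<open>b \<in> {..<N}\<close> cong_less_modulus_unique_nat by auto
qed

lemma rot_sub: "0 < N \<Longrightarrow> rot N t A \<subseteq> {..<N}"
  unfolding rot_def by auto

lemma rot_card: "A \<subseteq> {..<N} \<Longrightarrow> card (rot N t A) = card A"
  unfolding rot_def by (rule card_image, rule inj_on_subset[OF inj_shift])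

lemma rot_wt: "A \<subseteq> {..<N} \<Longrightarrow> (\<Sum>(rot N t A)) mod N = (\<Sum>A + card A * t) mod N"
proof -
  assume A: "A \<subseteq> {..<N}"
  have "\<Sum>(rot N t A) = (\<Sum>a\<in>A. (a + t) mod N)"
    unfolding rot_def by (subst sum.reindex) (auto intro: inj_on_subset[OF inj_shift A])
  then have "(\<Sum>(rot N t A)) mod N = (\<Sum>a\<in>A. (a + t)) mod N"
    by (simp add: mod_sum_eq)
  also have "(\<Sum>a\<in>A. (a + t)) = \<Sum>A + card A * t" by (simp add: sum.distrib)
  finally show ?thesis .
qed

lemma coprime_h: "coprime (h::nat) (2*h+1)"
proof -
  have "coprime (2*h) (Suc (2*h))" by (rule coprime_Suc_right_nat)
  then show ?thesis using coprime_mult_left_iff by (metis Suc_eq_plus1)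
qed
lemma hmul_inj: "(N::nat) = 2*h+1 \<Longrightarrow> t < N \<Longrightarrow> t' < N \<Longrightarrow> (h*t) mod N = (h*t') mod N \<Longrightarrow> t = t'"
proof -
  assume a: "N = 2*h+1" "t < N" "t' < N" "(h*t) mod N = (h*t') mod N"
  then have "[h*t = h*t'] (mod N)" by (simp add: cong_def)
  then have "[t = t'] (mod N)" using cong_mult_lcancel_nat coprime_h a(1) by (metis coprime_commute)
  then show "t = t'" using a cong_less_modulus_unique_nat by blast
qed

lemma hmul_surj: assumes "(N::nat) = 2*h+1" shows "\<exists>s<N. (w + h*s) mod N = 0"
proof -
  have inj: "inj_on (\<lambda>s. (h*s) mod N) {..<N}"
  proof (rule inj_onI)
    fix x y assume xy: "x \<in> {..<N}" "y \<in> {..<N}" "h*x mod N = h*y mod N"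
    have "x < N" "y < N" using xy by auto
    then show "x = y" using hmul_inj[OF assms \<open>x < N\<close> \<open>y < N\<close> xy(3)] by blast
  qed
  have sub: "(\<lambda>s. (h*s) mod N) ` {..<N} \<subseteq> {..<N}" using assms by auto
  have eq: "(\<lambda>s. (h*s) mod N) ` {..<N} = {..<N}"
    by (rule card_subset_eq[OF _ sub]) (simp_all add: card_image[OF inj])
  have Npos: "0 < N" using assms by simp
  have "(N - w mod N) mod N \<in> {..<N}" using Npos by simp
  then obtain s where s: "s < N" "(h*s) mod N = (N - w mod N) mod N"
  proof -
    have "(N - w mod N) mod N \<in> (\<lambda>s. (h*s) mod N) ` {..<N}" using eq \<open>(N - w mod N) mod N \<in> {..<N}\<close> by simp
    then show ?thesis using that by auto
  qed
  have "(w + h*s) mod N = (w mod N + (h*s) mod N) mod N" by (simp add: mod_add_eq)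
  also have "\<dots> = (w mod N + (N - w mod N) mod N) mod N" using s by simp
  also have "\<dots> = 0"
  proof (cases "w mod N = 0")
    case True then show ?thesis by simp
  next
    case False
    have "w mod N < N" using Npos by simp
    then have "(N - w mod N) mod N = N - w mod N" using False by simp
    then show ?thesis using \<open>w mod N < N\<close> by simp
  qed
  finally have eq0: "(w + h*s) mod N = 0" .
  show ?thesis using s(1) eq0 by auto
qed

lemma rot_inv: "A \<subseteq> {..<N} \<Longrightarrow> t \<le> N \<Longrightarrow> rot N (N - t) (rot N t A) = A"
proof -
  assume A: "A \<subseteq> {..<N}" and t: "t \<le> N"
  have "rot N (N - t) (rot N t A) = rot N (t + (N - t)) A" by (rule rot_comp)
  also have "\<dots> = rot N ((t + (N - t)) mod N) A" by (rule rot_mod)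
  also have "(t + (N - t)) mod N = 0" using t by simp
  finally show ?thesis using rot_0[OF A] by simp
qed

definition Tset :: "nat \<Rightarrow> nat set set" where
  "Tset h = {A. A \<subseteq> {..<2*h+1} \<and> card A = h}"

definition T0set :: "nat \<Rightarrow> nat set set" where
  "T0set h = {A \<in> Tset h. \<Sum>A mod (2*h+1) = 0}"

definition orb :: "nat \<Rightarrow> nat set \<times> nat \<Rightarrow> nat set" where
  "orb h p = rot (2*h+1) (snd p) (fst p)"

lemma orb_bij: "bij_betw (orb h) (T0set h \<times> {..<2*h+1}) (Tset h)"
proof -
  define N where "N = 2*h+1"
  have Npos: "0 < N" unfolding N_def by simp
  have wt0: "(\<Sum>(rot N t A)) mod N = (h*t) mod N" if "A \<in> T0set h" for A t
  proof -
    have A: "A \<subseteq> {..<N}" "card A = h" "\<Sum>A mod N = 0"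
      using that unfolding T0set_def Tset_def N_def by auto
    have "(\<Sum>(rot N t A)) mod N = (\<Sum>A + card A * t) mod N" by (rule rot_wt[OF A(1)])
    also have "\<dots> = (\<Sum>A mod N + h * t) mod N" using A(2) by (simp add: mod_add_left_eq)
    also have "\<dots> = (h*t) mod N" using A(3) by simp
    finally show ?thesis .
  qed
  have inj: "inj_on (orb h) (T0set h \<times> {..<N})"
  proof (rule inj_onI)
    fix p q assume p: "p \<in> T0set h \<times> {..<N}" and q: "q \<in> T0set h \<times> {..<N}" and e: "orb h p = orb h q"
    obtain A t where pAt: "p = (A, t)" by (cases p)
    obtain B s where qBs: "q = (B, s)" by (cases q)
    have A: "A \<in> T0set h" "t < N" using p pAt by auto
    have B: "B \<in> T0set h" "s < N" using q qBs by auto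
    have e': "rot N t A = rot N s B" using e pAt qBs unfolding orb_def N_def by simp
    have "(h*t) mod N = (h*s) mod N" using wt0[OF A(1), of t] wt0[OF B(1), of s] e' by simp
    then have ts: "t = s" using hmul_inj[OF N_def A(2) B(2)] by blast
    have As: "A \<subseteq> {..<N}" "B \<subseteq> {..<N}" using A(1) B(1) unfolding T0set_def Tset_def N_def by auto
    have "A = rot N (N - t) (rot N t A)" using rot_inv[OF As(1)] A(2) by simp
    also have "\<dots> = rot N (N - s) (rot N s B)" using e' ts by simp
    also have "\<dots> = B" using rot_inv[OF As(2)] B(2) by simp
    finally show "p = q" using pAt qBs ts by simp
  qed
  have img: "orb h ` (T0set h \<times> {..<N}) = Tset h"
  proof
    show "orb h ` (T0set h \<times> {..<N}) \<subseteq> Tset h"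
    proof
      fix B assume "B \<in> orb h ` (T0set h \<times> {..<N})"
      then obtain A t where At: "A \<in> T0set h" "B = rot N t A"
        unfolding orb_def N_def by auto
      have A: "A \<subseteq> {..<N}" "card A = h" using At(1) unfolding T0set_def Tset_def N_def by auto
      show "B \<in> Tset h" using At(2) rot_sub[OF Npos] rot_card[OF A(1)] A(2)
        unfolding Tset_def N_def by auto
    qed
  next
    show "Tset h \<subseteq> orb h ` (T0set h \<times> {..<N})"
    proof
      fix B assume B: "B \<in> Tset h"
      then have Bs: "B \<subseteq> {..<N}" "card B = h" unfolding Tset_def N_def by auto
      obtain s where s: "s < N" "(\<Sum>B + h*s) mod N = 0" using hmul_surj[OF N_def, of "\<Sum>B"] by auto
      define A where "A = rot N s B"
      have As: "A \<subseteq> {..<N}" "card A = h" unfolding A_def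
        by (simp_all add: rot_sub[OF Npos] rot_card[OF Bs(1)] Bs(2))
      have "\<Sum>A mod N = (\<Sum>B + card B * s) mod N" unfolding A_def by (rule rot_wt[OF Bs(1)])
      also have "\<dots> = (\<Sum>B + h*s) mod N" using Bs(2) by simp
      finally have "\<Sum>A mod N = 0" using s(2) by simp
      then have AT0: "A \<in> T0set h" using As unfolding T0set_def Tset_def N_def by auto
      define t where "t = (N - s) mod N"
      have tN: "t < N" unfolding t_def using Npos by simp
      have "rot N t A = rot N (s + t) B" unfolding A_def by (rule rot_comp)
      also have "\<dots> = rot N ((s + t) mod N) B" by (rule rot_mod)
      also have "(s + t) mod N = 0" unfolding t_def using s(1) by (simp add: mod_add_right_eq)
      finally have "rot N t A = B" using rot_0[OF Bs(1)] by simp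
      then have "B = orb h (A, t)" unfolding orb_def N_def by simp
      then show "B \<in> orb h ` (T0set h \<times> {..<N})" using AT0 tN by blast
    qed
  qed
  show ?thesis unfolding bij_betw_def using inj img N_def by simp
qed

lemma inj_shift2: "inj_on (\<lambda>s::nat. (a + s) mod N) {..<N}"
proof -
  have e: "(\<lambda>s::nat. (a + s) mod N) = (\<lambda>s. (s + a) mod N)" by (simp add: add.commute)
  show ?thesis unfolding e by (rule inj_shift)
qed

lemma shift_back: "(a::nat) < N \<Longrightarrow> i < N \<Longrightarrow> (a + (i + N - a) mod N) mod N = i"
proof -
  assume a: "a < N" and i: "i < N"
  have "(a + (i + N - a) mod N) mod N = (a + (i + N - a)) mod N" by (rule mod_add_right_eq)
  also have "a + (i + N - a) = i + N" using a by simp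
  finally show ?thesis using i by simp
qed

lemma count_rot:
  assumes A: "A \<subseteq> {..<N}" and i: "i < N"
  shows "card {t \<in> {..<N}. i \<in> rot N t A} = card A"
proof -
  have Npos: "0 < N" using i by simp
  have "bij_betw (\<lambda>a. (i + N - a) mod N) A {t \<in> {..<N}. i \<in> rot N t A}"
    unfolding bij_betw_def
  proof
    show "inj_on (\<lambda>a. (i + N - a) mod N) A"
    proof (rule inj_onI)
      fix a b assume ab: "a \<in> A" "b \<in> A" "(i + N - a) mod N = (i + N - b) mod N"
      have "a < N" "b < N" using ab A by auto
      have "(a + (i + N - a) mod N) mod N = (b + (i + N - a) mod N) mod N"
        using shift_back[OF \<open>a < N\<close> i] shift_back[OF \<open>b < N\<close> i] ab(3) by simp
      then show "a = b" using inj_shift[of "(i + N - a) mod N" N] \<open>a < N\<close> \<open>b < N\<close>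
        unfolding inj_on_def by blast
    qed
  next
    show "(\<lambda>a. (i + N - a) mod N) ` A = {t \<in> {..<N}. i \<in> rot N t A}"
    proof
      show "(\<lambda>a. (i + N - a) mod N) ` A \<subseteq> {t \<in> {..<N}. i \<in> rot N t A}"
      proof
        fix t assume "t \<in> (\<lambda>a. (i + N - a) mod N) ` A"
        then obtain a where a: "a \<in> A" "t = (i + N - a) mod N" by blast
        have "a < N" using a A by auto
        have "(a + t) mod N = i" using shift_back[OF \<open>a < N\<close> i] a(2) by simp
        then have "i \<in> rot N t A" unfolding rot_def using a(1) by blast
        moreover have "t < N" using a(2) Npos by simp
        ultimately show "t \<in> {t \<in> {..<N}. i \<in> rot N t A}" by simp
      qed
    next
      show "{t \<in> {..<N}. i \<in> rot N t A} \<subseteq> (\<lambda>a. (i + N - a) mod N) ` A"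
      proof
        fix t assume t: "t \<in> {t \<in> {..<N}. i \<in> rot N t A}"
        then obtain a where a: "a \<in> A" "(a + t) mod N = i" unfolding rot_def by blast
        have "a < N" using a A by auto
        have tN: "t < N" using t by simp
        have t2: "(i + N - a) mod N < N" using Npos by simp
        have "(a + t) mod N = (a + (i + N - a) mod N) mod N"
          using a(2) shift_back[OF \<open>a < N\<close> i] by simp
        then have "t = (i + N - a) mod N"
          using inj_shift2[of a N] tN t2 unfolding inj_on_def by blast
        then show "t \<in> (\<lambda>a. (i + N - a) mod N) ` A" using a(1) by blast
      qed
    qed
  qed
  then show ?thesis by (simp add: bij_betw_same_card)
qed

lemma orb_inj_sub: assumes "R \<subseteq> T0set h" shows "inj_on (orb h) (R \<times> {..<2*h+1})"
proof -
  have "inj_on (orb h) (T0set h \<times> {..<2*h+1})" using orb_bij[of h] unfolding bij_betw_def by blast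
  then show ?thesis by (rule inj_on_subset) (use assms in auto)
qed

lemma card_orb_img: assumes "R \<subseteq> T0set h" shows "card (orb h ` (R \<times> {..<2*h+1})) = (2*h+1) * card R"
proof -
  have "card (orb h ` (R \<times> {..<2*h+1})) = card (R \<times> {..<2*h+1})"
    by (rule card_image[OF orb_inj_sub[OF assms]])
  also have "\<dots> = card R * (2*h+1)" by (simp only: card_cartesian_product card_lessThan)
  finally show ?thesis by simp
qed

lemma card_T: "card (Tset h) = (2*h+1) * card (T0set h)"
proof -
  have "card (Tset h) = card (T0set h \<times> {..<2*h+1})" using bij_betw_same_card[OF orb_bij[of h]] by simp
  then show ?thesis by (simp add: card_cartesian_product)
qed

lemma T0_sub: "A \<in> T0set h \<Longrightarrow> A \<subseteq> {..<2*h+1} \<and> card A = h"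
  unfolding T0set_def Tset_def by auto

lemma finite_T0: "finite (T0set h)"
proof -
  have "T0set h \<subseteq> Pow {..<2*h+1}" unfolding T0set_def Tset_def by auto
  then show ?thesis by (rule finite_subset) simp
qed

lemma count_orb_img:
  assumes R: "R \<subseteq> T0set h" and i: "i < 2*h+1"
  shows "card {B \<in> orb h ` (R \<times> {..<2*h+1}). i \<in> B} = h * card R"
proof -
  define N where "N = 2*h+1"
  have fR: "finite R" using finite_subset[OF R finite_T0] .
  have "{B \<in> orb h ` (R \<times> {..<N}). i \<in> B} = orb h ` {p \<in> R \<times> {..<N}. i \<in> orb h p}" by auto
  moreover have "inj_on (orb h) {p \<in> R \<times> {..<N}. i \<in> orb h p}"
    using orb_inj_sub[OF R] unfolding N_def by (rule inj_on_subset) auto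
  ultimately have "card {B \<in> orb h ` (R \<times> {..<N}). i \<in> B} = card {p \<in> R \<times> {..<N}. i \<in> orb h p}"
    by (simp add: card_image)
  also have "{p \<in> R \<times> {..<N}. i \<in> orb h p} = Sigma R (\<lambda>A. {t \<in> {..<N}. i \<in> rot N t A})"
    unfolding orb_def N_def by auto
  also have "card \<dots> = (\<Sum>A\<in>R. card {t \<in> {..<N}. i \<in> rot N t A})"
    using fR by (simp add: card_SigmaI)
  also have "\<dots> = (\<Sum>A\<in>R. h)"
  proof (rule sum.cong)
    fix A assume "A \<in> R"
    then have "A \<subseteq> {..<N}" "card A = h" using R T0_sub unfolding N_def by blast+
    then show "card {t \<in> {..<N}. i \<in> rot N t A} = h" using count_rot i unfolding N_def by simp
  qed simp
  finally show ?thesis unfolding N_def by simp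
qed

lemma card_Pow_mem:
  assumes i: "(i::nat) < N"
  shows "card {A \<in> Pow {..<N}. i \<in> A} = 2^(N-1)"
proof -
  have "bij_betw (\<lambda>A. A - {i}) {A \<in> Pow {..<N}. i \<in> A} (Pow ({..<N} - {i}))"
  proof (rule bij_betw_byWitness[where f' = "\<lambda>B. insert i B"])
    show "\<forall>a\<in>{A \<in> Pow {..<N}. i \<in> A}. insert i (a - {i}) = a" by auto
    show "\<forall>a'\<in>Pow ({..<N} - {i}). insert i a' - {i} = a'" by auto
    show "(\<lambda>A. A - {i}) ` {A \<in> Pow {..<N}. i \<in> A} \<subseteq> Pow ({..<N} - {i})" by auto
    show "insert i ` Pow ({..<N} - {i}) \<subseteq> {A \<in> Pow {..<N}. i \<in> A}" using i by auto
  qed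
  then have "card {A \<in> Pow {..<N}. i \<in> A} = card (Pow ({..<N} - {i}))" by (rule bij_betw_same_card)
  also have "\<dots> = 2^(N-1)" using i by (simp add: card_Pow)
  finally show ?thesis .
qed

lemma card_upper_half:
  "2 * card {A \<in> Pow {..<2*h+1}. h < card A} = 2^(2*h+1)"
proof -
  define I where "I = {..<2*h+1}"
  define U where "U = {A \<in> Pow I. h < card A}"
  define L where "L = {A \<in> Pow I. card A \<le> h}"
  have fI: "finite I" unfolding I_def by simp
  have cI: "card I = 2*h+1" unfolding I_def by simp
  have "bij_betw (\<lambda>A. I - A) U L"
  proof (rule bij_betw_byWitness[where f' = "\<lambda>A. I - A"])
    show "\<forall>a\<in>U. I - (I - a) = a" unfolding U_def by auto
    show "\<forall>a'\<in>L. I - (I - a') = a'" unfolding L_def by auto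
    show "(\<lambda>A. I - A) ` U \<subseteq> L"
    proof
      fix B assume "B \<in> (\<lambda>A. I - A) ` U"
      then obtain A where A: "A \<subseteq> I" "h < card A" "B = I - A" unfolding U_def by auto
      have "card B = card I - card A" using A fI by (simp add: card_Diff_subset finite_subset)
      then show "B \<in> L" using A cI unfolding L_def by auto
    qed
    show "(\<lambda>A. I - A) ` L \<subseteq> U"
    proof
      fix B assume "B \<in> (\<lambda>A. I - A) ` L"
      then obtain A where A: "A \<subseteq> I" "card A \<le> h" "B = I - A" unfolding L_def by auto
      have "card B = card I - card A" using A fI by (simp add: card_Diff_subset finite_subset)
      then show "B \<in> U" using A cI unfolding U_def by auto
    qed
  qed
  then have cUL: "card U = card L" by (rule bij_betw_same_card)
  have "U \<union> L = Pow I" "U \<inter> L = {}" unfolding U_def L_def by auto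
  then have "card U + card L = card (Pow I)"
    using fI by (metis card_Un_disjoint finite_Pow_iff finite_Un)
  also have "\<dots> = 2^(2*h+1)" using fI cI by (simp add: card_Pow)
  finally show ?thesis using cUL unfolding U_def I_def by simp
qed

lemma card_split_mem:
  assumes i: "(i::nat) < N"
  shows "card {A \<in> Pow {..<N}. h < card A \<and> i \<in> A} =
         card {A \<in> Pow {..<N}. h < card A \<and> i \<notin> A} + card {A \<in> Pow {..<N}. card A = h \<and> i \<notin> A}"
proof -
  have "bij_betw (\<lambda>A. A - {i}) {A \<in> Pow {..<N}. h < card A \<and> i \<in> A} {B \<in> Pow {..<N}. h \<le> card B \<and> i \<notin> B}"
  proof (rule bij_betw_byWitness[where f' = "\<lambda>B. insert i B"])
    show "\<forall>a\<in>{A \<in> Pow {..<N}. h < card A \<and> i \<in> A}. insert i (a - {i}) = a" by auto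
    show "\<forall>a'\<in>{B \<in> Pow {..<N}. h \<le> card B \<and> i \<notin> B}. insert i a' - {i} = a'" by auto
    show "(\<lambda>A. A - {i}) ` {A \<in> Pow {..<N}. h < card A \<and> i \<in> A} \<subseteq> {B \<in> Pow {..<N}. h \<le> card B \<and> i \<notin> B}"
    proof
      fix B assume "B \<in> (\<lambda>A. A - {i}) ` {A \<in> Pow {..<N}. h < card A \<and> i \<in> A}"
      then obtain A where A: "A \<subseteq> {..<N}" "h < card A" "i \<in> A" "B = A - {i}" by auto
      have "finite A" using A(1) finite_subset by blast
      then have "card B = card A - 1" using A by simp
      then show "B \<in> {B \<in> Pow {..<N}. h \<le> card B \<and> i \<notin> B}" using A by auto
    qed
    show "insert i ` {B \<in> Pow {..<N}. h \<le> card B \<and> i \<notin> B} \<subseteq> {A \<in> Pow {..<N}. h < card A \<and> i \<in> A}"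
    proof
      fix A assume "A \<in> insert i ` {B \<in> Pow {..<N}. h \<le> card B \<and> i \<notin> B}"
      then obtain B where B: "B \<subseteq> {..<N}" "h \<le> card B" "i \<notin> B" "A = insert i B" by auto
      have "finite B" using B(1) finite_subset by blast
      then have "card A = card B + 1" using B by simp
      then show "A \<in> {A \<in> Pow {..<N}. h < card A \<and> i \<in> A}" using B i by auto
    qed
  qed
  then have "card {A \<in> Pow {..<N}. h < card A \<and> i \<in> A} = card {B \<in> Pow {..<N}. h \<le> card B \<and> i \<notin> B}"
    by (rule bij_betw_same_card)
  also have "{B \<in> Pow {..<N}. h \<le> card B \<and> i \<notin> B} =
      {A \<in> Pow {..<N}. h < card A \<and> i \<notin> A} \<union> {A \<in> Pow {..<N}. card A = h \<and> i \<notin> A}" by auto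
  also have "card \<dots> = card {A \<in> Pow {..<N}. h < card A \<and> i \<notin> A} + card {A \<in> Pow {..<N}. card A = h \<and> i \<notin> A}"
    by (rule card_Un_disjoint) auto
  finally show ?thesis .
qed

lemma core:
  fixes h :: nat
  defines "N \<equiv> 2*h+1"
  shows "\<exists>W \<subseteq> Pow {..<N}. 2 * int (card W) \<ge> 2^N + int (card (Tset h)) - 1 \<and>
     (\<forall>i<N. 2 * (2 * int (card {A \<in> W. i \<in> A}) - int (card W)) \<ge> int (card (Tset h)) - 1)"
proof -
  define m where "m = card (T0set h)"
  define r where "r = (m + 1) div 2"
  have "r \<le> card (T0set h)" unfolding r_def m_def by simp
  then obtain R where R: "R \<subseteq> T0set h" "card R = r" by (meson obtain_subset_with_card_n)
  define X where "X = orb h ` (R \<times> {..<N})"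
  define U where "U = {A \<in> Pow {..<N}. h < card A}"
  define W where "W = U \<union> X"
  have cT: "card (Tset h) = N * m" unfolding m_def N_def by (rule card_T)
  have XT: "X \<subseteq> Tset h" unfolding X_def N_def using orb_bij[of h] R(1) unfolding bij_betw_def by auto
  have TP: "Tset h \<subseteq> Pow {..<N}" unfolding Tset_def N_def by auto
  have fP: "finite (Pow {..<N})" by simp
  have fU: "finite U" unfolding U_def by simp
  have fX: "finite X" by (rule finite_subset[OF _ fP]) (use XT TP in auto)
  have disj: "U \<inter> X = {}" using XT unfolding U_def Tset_def by auto
  have cX: "card X = N * r" unfolding X_def N_def using card_orb_img[OF R(1)] R(2) by simp
  have cU: "2 * card U = 2^N" unfolding U_def N_def by (rule card_upper_half)
  have cW: "card W = card U + card X" unfolding W_def using disj fU fX by (simp add: card_Un_disjoint)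
  have WP: "W \<subseteq> Pow {..<N}" unfolding W_def U_def using XT TP by auto
  have r1: "m \<le> 2*r" "2*r \<le> m + 1" unfolding r_def by auto
  have part1: "2 * int (card W) \<ge> 2^N + int (card (Tset h)) - 1"
  proof -
    have a: "2 * card W = 2^N + 2 * (N * r)" using cW cU cX by simp
    have b0: "N * m \<le> N * (2 * r)" using r1(1) by (rule mult_le_mono2)
    have b: "N * m \<le> 2 * (N * r)" using b0 by (simp add: mult.left_commute)
    have "2 * card W + 1 \<ge> 2^N + card (Tset h)" using a b cT by linarith
    then have "int (2 * card W + 1) \<ge> int (2^N + card (Tset h))" by (simp only: of_nat_le_iff)
    then show ?thesis by simp
  qed
  have part2: "2 * (2 * int (card {A \<in> W. i \<in> A}) - int (card W)) \<ge> int (card (Tset h)) - 1" if i: "i < N" for i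
  proof -
    define P where "P = card {A \<in> Pow {..<N}. h < card A \<and> i \<in> A}"
    define Q where "Q = card {A \<in> Pow {..<N}. h < card A \<and> i \<notin> A}"
    define Z where "Z = card {A \<in> Pow {..<N}. card A = h \<and> i \<notin> A}"
    have PQZ: "P = Q + Z" unfolding P_def Q_def Z_def by (rule card_split_mem[OF i])
    have UPQ: "card U = P + Q"
    proof -
      have "U = {A \<in> Pow {..<N}. h < card A \<and> i \<in> A} \<union> {A \<in> Pow {..<N}. h < card A \<and> i \<notin> A}"
        unfolding U_def by auto
      moreover have "card \<dots> = P + Q" unfolding P_def Q_def by (rule card_Un_disjoint) auto
      ultimately show ?thesis by simp
    qed
    have iN: "i < 2*h+1" using i unfolding N_def .
    have cXi: "card {A \<in> X. i \<in> A} = h * r" unfolding X_def N_def using count_orb_img[OF R(1) iN] R(2) by simp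
    have TT: "orb h ` (T0set h \<times> {..<2*h+1}) = Tset h" using orb_bij[of h] unfolding bij_betw_def by auto
    have cTi: "card {A \<in> Tset h. i \<in> A} = h * m"
      using count_orb_img[OF order_refl iN] unfolding TT m_def .
    have ZT: "Z = card (Tset h) - card {A \<in> Tset h. i \<in> A}"
    proof -
      have "{A \<in> Pow {..<N}. card A = h \<and> i \<notin> A} = Tset h - {A \<in> Tset h. i \<in> A}"
        unfolding Tset_def N_def by auto
      moreover have "finite (Tset h)" by (rule finite_subset[OF TP fP])
      ultimately show ?thesis unfolding Z_def by (simp add: card_Diff_subset)
    qed
    have Zv: "Z = (h+1) * m" using ZT cT cTi unfolding N_def by (simp add: algebra_simps)
    have cWi: "card {A \<in> W. i \<in> A} = P + h * r"
    proof -
      have "{A \<in> W. i \<in> A} = {A \<in> Pow {..<N}. h < card A \<and> i \<in> A} \<union> {A \<in> X. i \<in> A}"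
        unfolding W_def U_def by auto
      moreover have "card \<dots> = P + card {A \<in> X. i \<in> A}" unfolding P_def
        by (rule card_Un_disjoint) (use disj fX in \<open>auto simp: U_def\<close>)
      ultimately show ?thesis using cXi by simp
    qed
    have "2 * int (card {A \<in> W. i \<in> A}) - int (card W) = int Z - int r"
      using cWi cW UPQ PQZ cX unfolding N_def by (simp add: algebra_simps)
    then show ?thesis using Zv cT r1(2) unfolding N_def by (simp add: algebra_simps)
  qed
  show ?thesis using WP part1 part2 by blast
qed

definition ivec :: "nat \<Rightarrow> nat set \<Rightarrow> nat \<Rightarrow> int" where
  "ivec n A j = (if j = 0 then 1 else if j < n then (if j - 1 \<in> A then 1 else -1) else 0)"

definition vec :: "nat \<Rightarrow> nat set \<Rightarrow> nat \<Rightarrow> real" where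
  "vec n A = (\<lambda>j. real_of_int (ivec n A j))"

lemma Vset_eq: assumes "1 \<le> n" shows "Vset n = vec n ` Pow {..<n-1}"
proof
  show "vec n ` Pow {..<n-1} \<subseteq> Vset n"
    unfolding Vset_def vec_def ivec_def using assms by (auto split: if_splits)
next
  show "Vset n \<subseteq> vec n ` Pow {..<n-1}"
  proof
    fix v assume v: "v \<in> Vset n"
    define A where "A = {a. a < n - 1 \<and> v (a+1) = 1}"
    have "v = vec n A"
    proof
      fix j
      show "v j = vec n A j"
      proof (cases "j = 0")
        case True then show ?thesis using v unfolding Vset_def vec_def ivec_def by simp
      next
        case False
        show ?thesis
        proof (cases "j < n")
          case True
          have j1: "j - 1 + 1 = j" using False by simp
          have "v j = 1 \<or> v j = -1" using v True unfolding Vset_def by auto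
          then show ?thesis using False True j1 unfolding vec_def ivec_def A_def by auto
        next
          case jn: False
          then show ?thesis using v False unfolding Vset_def vec_def ivec_def by auto
        qed
      qed
    qed
    moreover have "A \<in> Pow {..<n-1}" unfolding A_def by auto
    ultimately show "v \<in> vec n ` Pow {..<n-1}" by blast
  qed
qed

lemma vec_inj: "inj_on (vec n) (Pow {..<n-1})"
proof (rule inj_onI)
  fix A B assume A: "A \<in> Pow {..<n-1}" and B: "B \<in> Pow {..<n-1}" and e: "vec n A = vec n B"
  show "A = B"
  proof
    show "A \<subseteq> B"
    proof
      fix a assume a: "a \<in> A"
      then have an: "a + 1 < n" using A by auto
      have "vec n A (a+1) = vec n B (a+1)" using e by simp
      then show "a \<in> B" using a an unfolding vec_def ivec_def by (auto split: if_splits)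
    qed
    show "B \<subseteq> A"
    proof
      fix a assume a: "a \<in> B"
      then have an: "a + 1 < n" using B by auto
      have "vec n A (a+1) = vec n B (a+1)" using e by simp
      then show "a \<in> A" using a an unfolding vec_def ivec_def by (auto split: if_splits)
    qed
  qed
qed

lemma sum_ivec0: "(\<Sum>A\<in>S. ivec n A 0) = int (card S)"
  unfolding ivec_def by simp

lemma sum_ivecj:
  assumes "finite S" "0 < j" "j < n"
  shows "(\<Sum>A\<in>S. ivec n A j) = 2 * int (card {A \<in> S. j - 1 \<in> A}) - int (card S)"
proof -
  have "(\<Sum>A\<in>S. ivec n A j) = (\<Sum>A\<in>S. if j - 1 \<in> A then 1 else -1)"
    unfolding ivec_def using assms by simp
  also have "\<dots> = (\<Sum>A\<in>{A \<in> S. j - 1 \<in> A}. 1) + (\<Sum>A\<in>{A \<in> S. j - 1 \<notin> A}. -1)"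
    using assms(1) by (simp add: sum.If_cases Int_def)
  also have "\<dots> = int (card {A \<in> S. j - 1 \<in> A}) - int (card {A \<in> S. j - 1 \<notin> A})" by simp
  also have "card {A \<in> S. j - 1 \<notin> A} = card S - card {A \<in> S. j - 1 \<in> A}"
  proof -
    have "{A \<in> S. j - 1 \<notin> A} = S - {A \<in> S. j - 1 \<in> A}" by auto
    then show ?thesis using assms(1) by (simp add: card_Diff_subset)
  qed
  also have "int (card S - card {A \<in> S. j - 1 \<in> A}) = int (card S) - int (card {A \<in> S. j - 1 \<in> A})"
    using assms(1) by (simp add: card_mono of_nat_diff)
  finally show ?thesis by simp
qed

theorem lemma4p5:
  fixes k n :: nat
  assumes "k \<ge> 1" and "n = 2 ^ k"
  shows "\<exists>w :: nat \<Rightarrow> int. (\<forall>i<n. w i \<le> 1) \<and> (\<forall>i. n \<le> i \<longrightarrow> w i = 0) \<and>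
           (\<lambda>_. 0) \<in> shifted n w \<and> shifted n w \<subseteq> KM n (Mval n)"
proof -
  have n2: "2 \<le> n"
  proof -
    have "(2::nat)^1 \<le> 2^k" using assms(1) by (rule power_increasing) simp
    then show ?thesis using assms(2) by simp
  qed
  have ev: "even n" using assms by simp
  define h where "h = n div 2 - 1"
  define N where "N = n - 1"
  have NN: "N = 2*h+1" unfolding N_def h_def using n2 ev by (auto elim!: evenE)
  have hn: "n div 2 = h + 1" unfolding h_def using n2 by auto
  have N1: "1 \<le> N" using NN by simp
  define c where "c = (n - 1) choose (n div 2)"
  have cT: "card (Tset h) = c"
  proof -
    have "card (Tset h) = card {..<2*h+1} choose h" unfolding Tset_def by (rule n_subsets) simp
    also have "\<dots> = (2*h+1) choose h" by simp
    also have "\<dots> = (2*h+1) choose ((2*h+1) - h)" by (rule binomial_symmetric) simp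
    also have "(2*h+1) - h = h + 1" by simp
    finally show ?thesis unfolding c_def using NN hn N_def by simp
  qed
  obtain W where WP: "W \<subseteq> Pow {..<N}"
    and p1: "2 * int (card W) \<ge> 2^N + int c - 1"
    and p2: "\<forall>i<N. 2 * (2 * int (card {A \<in> W. i \<in> A}) - int (card W)) \<ge> int c - 1"
    using core[of h] unfolding NN[symmetric] cT by blast
  have fW: "finite W" by (rule finite_subset[OF WP]) simp
  define X where "X j = (\<Sum>A\<in>W. ivec n A j)" for j
  define S where "S j = (\<Sum>A\<in>Pow {..<N}. ivec n A j)" for j
  define w where "w j = (if j < n then int c + S j - 2 * X j else 0)" for j
  define xs where "xs = (\<lambda>j. \<Sum>v\<in>vec n ` W. v j)"
  have S0: "S 0 = 2^N" unfolding S_def sum_ivec0 by (simp add: card_Pow)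
  have Sj: "S j = 0" if "0 < j" "j < n" for j
  proof -
    have jN: "j - 1 < N" using that unfolding N_def by simp
    have "S j = 2 * int (card {A \<in> Pow {..<N}. j - 1 \<in> A}) - int (card (Pow {..<N}))"
      unfolding S_def by (rule sum_ivecj) (use that in auto)
    also have "\<dots> = 2 * 2^(N-1) - 2^N" using card_Pow_mem[OF jN] by (simp add: card_Pow)
    also have "\<dots> = 0" using N1 by (cases N) auto
    finally show ?thesis .
  qed
  have X0: "X 0 = int (card W)" unfolding X_def by (rule sum_ivec0)
  have Xj: "X j = 2 * int (card {A \<in> W. j - 1 \<in> A}) - int (card W)" if "0 < j" "j < n" for j
    unfolding X_def by (rule sum_ivecj) (use that fW in auto)
  have wle: "w j \<le> 1" if "j < n" for j
  proof (cases "j = 0")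
    case True
    then show ?thesis unfolding w_def using that S0 X0 p1 by simp
  next
    case False
    have jN: "j - 1 < N" using that False unfolding N_def by simp
    have "int c - 1 \<le> 2 * (2 * int (card {A \<in> W. j - 1 \<in> A}) - int (card W))" using p2 jN by blast
    then show ?thesis unfolding w_def using that False Sj[of j] Xj[of j] by simp
  qed
  have injW: "inj_on (vec n) W" using vec_inj[of n] WP unfolding N_def by (rule inj_on_subset)
  have xsX: "xs j = real_of_int (X j)" for j
  proof -
    have "xs j = (\<Sum>A\<in>W. vec n A j)" unfolding xs_def by (simp add: sum.reindex[OF injW])
    also have "\<dots> = real_of_int (X j)" unfolding X_def vec_def by simp
    finally show ?thesis .
  qed
  have VsetE: "Vset n = vec n ` Pow {..<N}" unfolding N_def using n2 by (intro Vset_eq) simp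
  have injP: "inj_on (vec n) (Pow {..<N})" using vec_inj[of n] unfolding N_def .
  have gS: "gV n j = real_of_int (S j) / 2" for j
  proof -
    have "gV n j = (1/2) * (\<Sum>A\<in>Pow {..<N}. vec n A j)" unfolding gV_def VsetE
      by (simp add: sum.reindex[OF injP])
    also have "\<dots> = real_of_int (S j) / 2" unfolding S_def vec_def by simp
    finally show ?thesis .
  qed
  have sh: "shifted n w = (\<lambda>x. \<lambda>j. if j < n then x j - xs j else 0) ` Pset n"
    unfolding shifted_def
  proof (rule image_cong[OF refl])
    fix x :: "nat \<Rightarrow> real"
    show "(\<lambda>i. if i < n then x i - gV n i - 1/2 * real (n - 1 choose (n div 2)) + 1/2 * real_of_int (w i) else 0)
        = (\<lambda>j. if j < n then x j - xs j else 0)"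
    proof
      fix j
      show "(if j < n then x j - gV n j - 1/2 * real (n - 1 choose (n div 2)) + 1/2 * real_of_int (w j) else 0)
          = (if j < n then x j - xs j else 0)"
        unfolding gS xsX w_def c_def[symmetric] by (simp add: field_simps)
    qed
  qed
  have xsP: "xs \<in> Pset n"
  proof -
    have "vec n ` W \<subseteq> Vset n" unfolding VsetE using WP by auto
    then show ?thesis unfolding Pset_def xs_def by blast
  qed
  have zero: "(\<lambda>_. 0) \<in> shifted n w"
  proof -
    have e: "(\<lambda>_. 0 :: real) = (\<lambda>j. if j < n then xs j - xs j else 0)" by auto
    show ?thesis unfolding sh
      by (rule image_eqI[where f = "\<lambda>x. \<lambda>j. if j < n then x j - xs j else 0" and x = xs, OF e xsP])
  qed
  have fV: "finite (Vset n)" unfolding VsetE by simp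
  have vpm: "v j = 1 \<or> v j = -1" if "v \<in> Vset n" "j < n" for v j
    using that unfolding Vset_def by (cases "j = 0") auto
  have xbound: "(\<Sum>v\<in>W0. v j) \<le> (real_of_int (S j) + 2^N) / 2" if W0: "W0 \<subseteq> Vset n" and j: "j < n" for W0 j
  proof -
    have fW0: "finite W0" using finite_subset[OF W0 fV] .
    have "(\<Sum>v\<in>W0. v j) \<le> (\<Sum>v\<in>W0. (v j + 1) / 2)"
      by (rule sum_mono) (use vpm W0 j in fastforce)
    also have "\<dots> \<le> (\<Sum>v\<in>Vset n. (v j + 1) / 2)"
      by (rule sum_mono2[OF fV W0]) (use vpm j in fastforce)
    also have "\<dots> = (\<Sum>A\<in>Pow {..<N}. (vec n A j + 1) / 2)" unfolding VsetE
      by (simp add: sum.reindex[OF injP])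
    also have "\<dots> = ((\<Sum>A\<in>Pow {..<N}. vec n A j) + real (card (Pow {..<N}))) / 2"
      by (simp add: sum_divide_distrib[symmetric] sum.distrib)
    also have "\<dots> = (real_of_int (S j) + 2^N) / 2" unfolding S_def vec_def by (simp add: card_Pow)
    finally show ?thesis .
  qed
  have Mv: "Mval n = 2^N / 2 - real c / 2 + 1/2"
  proof -
    have NS: "N = Suc (n-2)" using n2 unfolding N_def by simp
    have "(2::real)^N = 2 * 2^(n-2)" unfolding NS by simp
    then show ?thesis unfolding Mval_def c_def by simp
  qed
  have sub: "shifted n w \<subseteq> KM n (Mval n)"
  proof
    fix y assume "y \<in> shifted n w"
    then obtain x where x: "x \<in> Pset n" "y = (\<lambda>j. if j < n then x j - xs j else 0)" unfolding sh by blast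
    obtain W0 where W0: "x = (\<lambda>i. \<Sum>v\<in>W0. v i)" "W0 \<subseteq> Vset n" using x(1) unfolding Pset_def by blast
    show "y \<in> KM n (Mval n)" unfolding KM_def
    proof (intro CollectI allI impI)
      fix j assume j: "j < n"
      have xb: "x j \<le> (real_of_int (S j) + 2^N) / 2" using xbound[OF W0(2) j] W0(1) by simp
      have wj: "real_of_int (int c + S j - 2 * X j) \<le> 1" using wle[OF j] j unfolding w_def by simp
      have "y j = x j - real_of_int (X j)" using x(2) j xsX by simp
      then show "y j \<le> Mval n" using xb wj unfolding Mv by simp
    qed
  qed
  have "\<forall>i. n \<le> i \<longrightarrow> w i = 0" unfolding w_def by simp
  then show ?thesis using wle zero sub by blast
qed

end
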